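(* Let $H_{\mathrm{gen}}$ be a generalized Hubbard Hamiltonian on a finite simple graph $G=(V,E)$ and let $\eta^\dagger=\sum_{\boldsymbol r}q_{\boldsymbol r}c^\dagger_{\boldsymbol r,\uparrow}c^\dagger_{\boldsymbol r,\downarrow}$ satisfy $[H_{\mathrm{gen}},\eta^\dagger]=\mathcal{E}\eta^\dagger$ for some $\mathcal{E}\in\mathbb{R}$. Let $M\ge1$, let $\mathcal{S}$ be a collection of $(M+1)$-element subsets of $V$, and for each $S\in\mathcal{S}$ and each spin assignment $\sigma:S\to\{\uparrow,\downarrow\}$ let $V^{\sigma}_S\in\mathbb{R}$. Define $$\hat I_{M+1}=\sum_{S\in\mathcal{S}}\ \sum_{\sigma:S\to\{\uparrow,\downarrow\}}V^{\sigma}_S\prod_{\boldsymbol r\in S}\hat n_{\boldsymbol r,\sigma(\boldsymbol r)},$$ and assume $\sum_{\sigma:S\to\{\uparrow,\downarrow\}}V^{\sigma}_S=0$ for every $S\in\mathcal{S}$. Let $H=H_{\mathrm{gen}}+\hat I_{M+1}$, $H_0=H$, $H_{n+1}=[H_n,\eta^\dagger]$, and let $\ket{\Omega}$ be the fermionic vacuum. Then $H\ket\Omega=0$, $H_1\ket\Omega=\mathcal{E}\eta^\dagger\ket\Omega$, $H_n\ket\Omega=0$ for $2\le n\le M$, $H_{M+1}=0$, and for every integer $n\ge0$, $$H\,(\eta^\dagger)^n\ket\Omega=n\mathcal{E}\,(\eta^\dagger)^n\ket\Omega.$$ (For $M=1$ this covers two-body density interactions $\hat I_2=\sum_{\sigma,\sigma'}\sum_{\{\boldsymbol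 r,\boldsymbol r'\}}V^{\sigma,\sigma'}_{\boldsymbol r,\boldsymbol r'}\hat n_{\boldsymbol r,\sigma}\hat n_{\boldsymbol r',\sigma'}$ over pairs of distinct sites with $\sum_{\sigma,\sigma'}V^{\sigma,\sigma'}_{\boldsymbol r,\boldsymbol r'}=0$ for each pair, e.g. nearest-neighbour $S^z S^z$ interactions.)
   Context: Generalized Hubbard Hamiltonian on a finite simple graph $G=(V,E)$ (each edge with a fixed orientation): $H_{\mathrm{gen}}=-\sum_{\sigma,\sigma'}\sum_{\{\boldsymbol r,\boldsymbol r'\}\in E}(t^{\sigma,\sigma'}_{\boldsymbol r,\boldsymbol r'}c^\dagger_{\boldsymbol r,\sigma}c_{\boldsymbol r',\sigma'}+t^{\sigma',\sigma}_{\boldsymbol r',\boldsymbol r}c^\dagger_{\boldsymbol r',\sigma'}c_{\boldsymbol r,\sigma})-\sum_{\boldsymbol r,\sigma}\mu_{\boldsymbol r,\sigma}\hat n_{\boldsymbol r,\sigma}+\sum_{\boldsymbol r}U_{\boldsymbol r}\hat n_{\boldsymbol r,\uparrow}\hat n_{\boldsymbol r,\downarrow}$ with $t^{\sigma,\sigma'}_{\boldsymbol r,\boldsymbol r'}=\overline{t^{\sigma',\sigma}_{\boldsymbol r',\boldsymbol r}}$ and real $\mu_{\boldsymbol r,\sigma},U_{\boldsymbol r}$; $c,c^\dagger$ are spin-1/2 fermion operators with canonical anticommutation relations, $\hat n_{\boldsymbol r,\sigma}=c^\dagger_{\boldsymbol r,\sigma}c_{\boldsymbol r,\sigma}$; $q_{\boldsymbol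 r}\in\mathbb{C}$. The vacuum $\ket\Omega$ is the state annihilated by all $c_{\boldsymbol r,\sigma}$. *)

theory Defs
  imports Complex_Main "HOL-Library.FuncSet" "HOL-Library.Function_Algebras"
begin

text \<open>A state is a coefficient
function on the occupation-number basis: basis vectors are indexed by the set of
occupied modes.  Sites form a finite linearly ordered type; a graph vertex set
V is a subset of it.\<close>

datatype spin = Up | Dn

type_synonym 'a state = "('a \<times> spin) set \<Rightarrow> complex"
type_synonym 'a op = "'a state \<Rightarrow> 'a state"

definition mode_less :: "('a::linorder \<times> spin) \<Rightarrow> ('a \<times> spin) \<Rightarrow> bool" where
  "mode_less m m' \<longleftrightarrow> fst m < fst m' \<or> (fst m = fst m' \<and> snd m = Up \<and> snd m' = Dn)"

definition jw_sign :: "('a::linorder \<times> spin) \<Rightarrow> ('a \<times> spin) set \<Rightarrow> complex" where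
  "jw_sign m T = (-1) ^ card {x \<in> T. mode_less x m}"

text \<open>Creation: c_dag m |T> = sign |T + m> if m not in T, else 0.\<close>
definition cdag :: "('a::{linorder,finite} \<times> spin) \<Rightarrow> 'a op" where
  "cdag m \<psi> = (\<lambda>S. if m \<in> S then jw_sign m (S - {m}) * \<psi> (S - {m}) else 0)"

definition cann :: "('a::{linorder,finite} \<times> spin) \<Rightarrow> 'a op" where
  "cann m \<psi> = (\<lambda>S. if m \<notin> S then jw_sign m S * \<psi> (insert m S) else 0)"

definition num :: "'a::{linorder,finite} \<Rightarrow> spin \<Rightarrow> 'a op" where
  "num r s = cdag (r, s) \<circ> cann (r, s)"

definition scale :: "complex \<Rightarrow> 'a state \<Rightarrow> 'a state" where
  "scale a \<psi> = (\<lambda>S. a * \<psi> S)"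

definition comm :: "'a op \<Rightarrow> 'a op \<Rightarrow> 'a op" where
  "comm A B = (\<lambda>\<psi>. A (B \<psi>) - B (A \<psi>))"

definition vacuum :: "'a::{linorder,finite} state" where
  "vacuum = (\<lambda>S. if S = {} then 1 else 0)"

text \<open>Generalized Hubbard Hamiltonian. E is the set of oriented edges.\<close>
definition H_gen :: "'a::{linorder,finite} set \<Rightarrow> ('a \<times> 'a) set
   \<Rightarrow> ('a \<Rightarrow> spin \<Rightarrow> 'a \<Rightarrow> spin \<Rightarrow> complex) \<Rightarrow> ('a \<Rightarrow> spin \<Rightarrow> real) \<Rightarrow> ('a \<Rightarrow> real) \<Rightarrow> 'a op" where
  "H_gen V E t \<mu> U \<psi> =
     - (\<Sum>\<sigma>\<in>UNIV. \<Sum>\<sigma>'\<in>UNIV. \<Sum>(r, r')\<in>E.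
          scale (t r \<sigma> r' \<sigma>') (cdag (r, \<sigma>) (cann (r', \<sigma>') \<psi>))
        + scale (t r' \<sigma>' r \<sigma>) (cdag (r', \<sigma>') (cann (r, \<sigma>) \<psi>)))
     - (\<Sum>r\<in>V. \<Sum>\<sigma>\<in>UNIV. scale (complex_of_real (\<mu> r \<sigma>)) (num r \<sigma> \<psi>))
     + (\<Sum>r\<in>V. scale (complex_of_real (U r)) (num r Up (num r Dn \<psi>)))"

definition eta_dag :: "'a::{linorder,finite} set \<Rightarrow> ('a \<Rightarrow> complex) \<Rightarrow> 'a op" where
  "eta_dag V q \<psi> = (\<Sum>r\<in>V. scale (q r) (cdag (r, Up) (cdag (r, Dn) \<psi>)))"

text \<open>Product of number operators over a finite set S of sites (they commute;
we compose them in increasing site order).\<close>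
definition num_prod :: "'a::{linorder,finite} set \<Rightarrow> ('a \<Rightarrow> spin) \<Rightarrow> 'a op" where
  "num_prod S \<sigma> = foldr (\<circ>) (map (\<lambda>r. num r (\<sigma> r)) (sorted_list_of_set S)) id"

definition I_int :: "'a::{linorder,finite} set set \<Rightarrow> ('a set \<Rightarrow> ('a \<Rightarrow> spin) \<Rightarrow> real) \<Rightarrow> 'a op" where
  "I_int \<S> Vs \<psi> = (\<Sum>S\<in>\<S>. \<Sum>\<sigma>\<in>(S \<rightarrow>\<^sub>E (UNIV::spin set)).
      scale (complex_of_real (Vs S \<sigma>)) (num_prod S \<sigma> \<psi>))"

primrec Hseq :: "'a op \<Rightarrow> 'a op \<Rightarrow> nat \<Rightarrow> 'a op" where
  "Hseq H eta 0 = H"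
| "Hseq H eta (Suc n) = comm (Hseq H eta n) eta"

end

theory Submission
  imports Defs
begin


lemma sum_fun_app: "(\<Sum>x\<in>A. f x) T = (\<Sum>x\<in>A. f x T)"
  by (induction A rule: infinite_finite_induct) auto

lemma jw_sq: "jw_sign m T * jw_sign m T = 1"
  unfolding jw_sign_def by (simp add: power_mult_distrib[symmetric])

lemma num_eq: "num r s \<psi> = (\<lambda>T. if (r,s) \<in> T then \<psi> T else 0)"
  unfolding num_def cdag_def cann_def
  by (auto simp: fun_eq_iff insert_absorb jw_sq)

lemma pair_eq: "cdag (r,Up) (cdag (r,Dn) \<psi>) = (\<lambda>T. if {r}\<times>UNIV \<subseteq> T then \<psi> (T - {r}\<times>UNIV) else 0)"
proof (rule ext)
  fix T :: "('a \<times> spin) set"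
  have U: "(UNIV::spin set) = {Up, Dn}" using spin.exhaust by auto
  have e1: "{x \<in> T - {(r,Up)}. mode_less x (r,Up)} = {x\<in>T. fst x < r}"
    by (auto simp: mode_less_def)
  have e2: "{x \<in> T - {(r,Up)} - {(r,Dn)}. mode_less x (r,Dn)} = {x\<in>T. fst x < r}"
    by (auto simp: mode_less_def)
  have s: "jw_sign (r,Up) (T - {(r,Up)}) * jw_sign (r,Dn) (T - {(r,Up)} - {(r,Dn)}) = 1"
    unfolding jw_sign_def e1 e2 by (simp add: power_mult_distrib[symmetric])
  have d: "T - {(r,Up)} - {(r,Dn)} = T - {r}\<times>UNIV" using U by auto
  show "cdag (r,Up) (cdag (r,Dn) \<psi>) T = (if {r}\<times>UNIV \<subseteq> T then \<psi> (T - {r}\<times>UNIV) else 0)"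
  proof (cases "{r}\<times>UNIV \<subseteq> T")
    case True
    then have "(r,Up) \<in> T" "(r,Dn) \<in> T - {(r,Up)}" by auto
    then show ?thesis using True s d unfolding cdag_def by (simp add: mult.assoc[symmetric])
  next
    case False
    have "(r,Up) \<notin> T \<or> (r,Dn) \<notin> T - {(r,Up)}" 
    proof (rule ccontr)
      assume "\<not> ((r,Up) \<notin> T \<or> (r,Dn) \<notin> T - {(r,Up)})"
      then have "(r,Up) \<in> T" "(r,Dn) \<in> T" by auto
      then have "{r}\<times>UNIV \<subseteq> T" by (clarsimp, case_tac b, auto)
      then show False using False by simp
    qed
    then show ?thesis using False unfolding cdag_def by auto
  qed
qed

lemma eta_eq: "eta_dag V q \<psi> = (\<lambda>T. \<Sum>r\<in>V. q r * (if {r}\<times>UNIV \<subseteq> T then \<psi> (T - {r}\<times>UNIV) else 0))"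
  unfolding eta_dag_def by (simp add: fun_eq_iff sum_fun_app scale_def pair_eq)

lemma num_prod_list: "foldr (\<circ>) (map (\<lambda>r. num r (\<sigma> r)) xs) id \<psi> = (\<lambda>T. if \<forall>s\<in>set xs. (s, \<sigma> s) \<in> T then \<psi> T else 0)"
  by (induction xs) (auto simp: num_eq fun_eq_iff)

lemma num_prod_eq: "num_prod S \<sigma> \<psi> = (\<lambda>T. if \<forall>s\<in>S. (s, \<sigma> s) \<in> T then \<psi> T else 0)"
  unfolding num_prod_def num_prod_list by simp

lemma I_eq: "I_int \<S> Vs \<psi> = (\<lambda>T. (\<Sum>S\<in>\<S>. \<Sum>\<sigma>\<in>(S \<rightarrow>\<^sub>E (UNIV::spin set)).
      (if \<forall>s\<in>S. (s, \<sigma> s) \<in> T then complex_of_real (Vs S \<sigma>) else 0)) * \<psi> T)"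
  unfolding I_int_def sum_distrib_right
  by (rule ext, simp only: sum_fun_app scale_def num_prod_eq, intro sum.cong refl) simp

definition Opc :: "'a::{linorder,finite} set \<Rightarrow> ('a set \<Rightarrow> ('a\<times>spin) set \<Rightarrow> complex) \<Rightarrow> 'a op" where
  "Opc V c \<psi> = (\<lambda>T. \<Sum>W\<in>Pow V. if W \<times> UNIV \<subseteq> T then c W T * \<psi> (T - W \<times> UNIV) else 0)"

lemma comm_Opc:
  fixes V :: "'a::{linorder,finite} set"
  shows "comm (Opc V c) (eta_dag V q) =
    Opc V (\<lambda>W T. \<Sum>r\<in>W. q r * (c (W-{r}) T - c (W-{r}) (T - {r}\<times>UNIV)))"
proof (rule ext, rule ext)
  fix \<psi> :: "'a state" and T
  define g where "g r W = (if insert r W \<times> (UNIV::spin set) \<subseteq> T then q r * (c W T - c W (T - {r}\<times>UNIV)) * \<psi> (T - insert r W \<times> UNIV) else 0)" for r W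
  have f1: "(W\<times>UNIV \<subseteq> T \<and> {r}\<times>UNIV \<subseteq> T - W\<times>UNIV) \<longleftrightarrow> (r\<notin>W \<and> insert r W \<times> UNIV \<subseteq> T)" for r W
    by auto
  have f3: "({r}\<times>UNIV \<subseteq> T \<and> W\<times>UNIV \<subseteq> T - {r}\<times>UNIV) \<longleftrightarrow> (r\<notin>W \<and> insert r W \<times> UNIV \<subseteq> T)" for r W
    by auto
  have f2: "T - W\<times>UNIV - {r}\<times>UNIV = T - insert r W \<times> UNIV" for r W by auto
  have f4: "T - {r}\<times>UNIV - W\<times>UNIV = T - insert r W \<times> UNIV" for r W by auto
  have A: "Opc V c (eta_dag V q \<psi>) T = (\<Sum>r\<in>V. \<Sum>W\<in>Pow V. if r\<notin>W \<and> insert r W \<times> UNIV \<subseteq> T then q r * c W T * \<psi> (T - insert r W \<times> UNIV) else 0)"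
  proof -
    have "Opc V c (eta_dag V q \<psi>) T = (\<Sum>W\<in>Pow V. \<Sum>r\<in>V. if r\<notin>W \<and> insert r W \<times> UNIV \<subseteq> T then q r * c W T * \<psi> (T - insert r W \<times> UNIV) else 0)"
      unfolding Opc_def eta_eq
    proof (intro sum.cong refl)
      fix W assume "W \<in> Pow V"
      show "(if W \<times> UNIV \<subseteq> T then c W T * (\<Sum>r\<in>V. q r * (if {r} \<times> UNIV \<subseteq> T - W \<times> UNIV then \<psi> (T - W \<times> UNIV - {r} \<times> UNIV) else 0)) else 0) =
        (\<Sum>r\<in>V. if r \<notin> W \<and> insert r W \<times> UNIV \<subseteq> T then q r * c W T * \<psi> (T - insert r W \<times> UNIV) else 0)"
      proof (cases "W \<times> (UNIV::spin set) \<subseteq> T")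
        case True
        then show ?thesis
          by (simp add: sum_distrib_left f2, intro sum.cong refl) (use f1 f2 True in auto)
      next
        case False
        then have "\<forall>r\<in>V. \<not>(r\<notin>W \<and> insert r W \<times> UNIV \<subseteq> T)" by auto
        then have "(\<Sum>r\<in>V. if r \<notin> W \<and> insert r W \<times> UNIV \<subseteq> T then q r * c W T * \<psi> (T - insert r W \<times> UNIV) else 0) = 0"
          by (intro sum.neutral) auto
        then show ?thesis using False by simp
      qed
    qed
    also have "\<dots> = (\<Sum>r\<in>V. \<Sum>W\<in>Pow V. if r\<notin>W \<and> insert r W \<times> UNIV \<subseteq> T then q r * c W T * \<psi> (T - insert r W \<times> UNIV) else 0)"
      by (rule sum.swap)
    finally show ?thesis .
  qed
  have B: "eta_dag V q (Opc V c \<psi>) T = (\<Sum>r\<in>V. \<Sum>W\<in>Pow V. if r\<notin>W \<and> insert r W \<times> UNIV \<subseteq> T then q r * c W (T - {r}\<times>UNIV) * \<psi> (T - insert r W \<times> UNIV) else 0)"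
    unfolding Opc_def eta_eq
  proof (intro sum.cong refl)
    fix r assume "r \<in> V"
    show "q r * (if {r} \<times> UNIV \<subseteq> T then \<Sum>W\<in>Pow V. if W \<times> UNIV \<subseteq> T - {r} \<times> UNIV then c W (T - {r} \<times> UNIV) * \<psi> (T - {r} \<times> UNIV - W \<times> UNIV) else 0 else 0) =
       (\<Sum>W\<in>Pow V. if r \<notin> W \<and> insert r W \<times> UNIV \<subseteq> T then q r * c W (T - {r} \<times> UNIV) * \<psi> (T - insert r W \<times> UNIV) else 0)"
    proof (cases "{r} \<times> (UNIV::spin set) \<subseteq> T")
      case True
      then show ?thesis
        by (simp add: sum_distrib_left f4, intro sum.cong refl) (use f3 f4 True in auto)
    next
      case False
      then have "(\<Sum>W\<in>Pow V. if r \<notin> W \<and> insert r W \<times> UNIV \<subseteq> T then q r * c W (T - {r} \<times> UNIV) * \<psi> (T - insert r W \<times> UNIV) else 0) = 0"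
        by (intro sum.neutral) auto
      then show ?thesis using False by simp
    qed
  qed
  have LHS: "comm (Opc V c) (eta_dag V q) \<psi> T = (\<Sum>r\<in>V. \<Sum>W\<in>{W\<in>Pow V. r\<notin>W}. g r W)"
  proof -
    have "comm (Opc V c) (eta_dag V q) \<psi> T = Opc V c (eta_dag V q \<psi>) T - eta_dag V q (Opc V c \<psi>) T"
      by (simp add: comm_def)
    also have "\<dots> = (\<Sum>r\<in>V. \<Sum>W\<in>{W\<in>Pow V. r\<notin>W}. g r W)"
    proof -
      have per: "(\<Sum>W\<in>Pow V. (if r \<notin> W \<and> insert r W \<times> UNIV \<subseteq> T then q r * c W T * \<psi> (T - insert r W \<times> UNIV) else 0) -
           (if r \<notin> W \<and> insert r W \<times> UNIV \<subseteq> T then q r * c W (T - {r} \<times> UNIV) * \<psi> (T - insert r W \<times> UNIV) else 0)) =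
          (\<Sum>W\<in>{W \<in> Pow V. r \<notin> W}. g r W)" for r
        by (subst sum.inter_filter, simp, intro sum.cong refl) (auto simp: g_def algebra_simps)
      show ?thesis unfolding A B sum_subtractf[symmetric] per ..
    qed
  finally show ?thesis .
  qed
  define k where "k r W' = (if W' \<times> (UNIV::spin set) \<subseteq> T then q r * (c (W'-{r}) T - c (W'-{r}) (T - {r}\<times>UNIV)) * \<psi> (T - W' \<times> UNIV) else 0)" for r W'
  have "Opc V (\<lambda>W T. \<Sum>r\<in>W. q r * (c (W-{r}) T - c (W-{r}) (T - {r}\<times>UNIV))) \<psi> T
      = (\<Sum>W'\<in>Pow V. \<Sum>r\<in>{r\<in>V. r\<in>W'}. k r W')"
    unfolding Opc_def
  proof (intro sum.cong refl)
    fix W' assume "W' \<in> Pow V"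
    then have "{r\<in>V. r\<in>W'} = W'" by auto
    then show "(if W' \<times> UNIV \<subseteq> T then (\<Sum>r\<in>W'. q r * (c (W' - {r}) T - c (W' - {r}) (T - {r} \<times> UNIV))) * \<psi> (T - W' \<times> UNIV) else 0) =
       (\<Sum>r\<in>{r\<in>V. r\<in>W'}. k r W')"
      by (simp add: k_def sum_distrib_right)
  qed
  also have "\<dots> = (\<Sum>r\<in>V. \<Sum>W'\<in>{W'\<in>Pow V. r\<in>W'}. k r W')"
    by (rule sum.swap_restrict[symmetric]) auto
  also have "\<dots> = (\<Sum>r\<in>V. \<Sum>W\<in>{W\<in>Pow V. r\<notin>W}. g r W)"
  proof (rule sum.cong[OF refl])
    fix r assume r: "r \<in> V"
    show "(\<Sum>W'\<in>{W'\<in>Pow V. r\<in>W'}. k r W') = (\<Sum>W\<in>{W\<in>Pow V. r\<notin>W}. g r W)"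
      by (rule sum.reindex_bij_witness[where i="insert r" and j="\<lambda>W. W - {r}"])
         (use r in \<open>auto simp: k_def g_def insert_absorb\<close>)
  qed
  finally show "comm (Opc V c) (eta_dag V q) \<psi> T = Opc V (\<lambda>W T. \<Sum>r\<in>W. q r * (c (W-{r}) T - c (W-{r}) (T - {r}\<times>UNIV))) \<psi> T"
    using LHS by simp
qed

lemma Opc_cong:
  assumes "\<And>W T. W \<subseteq> V \<Longrightarrow> W \<times> UNIV \<subseteq> T \<Longrightarrow> c W T = d W T"
  shows "Opc V c = Opc V d"
  unfolding Opc_def using assms by (intro ext sum.cong refl) auto

definition GI :: "'a set set \<Rightarrow> ('a set \<Rightarrow> ('a \<Rightarrow> spin) \<Rightarrow> real) \<Rightarrow> 'a set \<Rightarrow> ('a\<times>spin) set \<Rightarrow> complex" where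
  "GI \<S> Vs W T = (\<Sum>S\<in>\<S>. if W \<subseteq> S then (\<Sum>\<sigma>\<in>(S \<rightarrow>\<^sub>E (UNIV::spin set)).
       if \<forall>s\<in>S-W. (s, \<sigma> s) \<in> T then complex_of_real (Vs S \<sigma>) else 0) else 0)"

definition cI :: "('a \<Rightarrow> complex) \<Rightarrow> 'a set set \<Rightarrow> ('a set \<Rightarrow> ('a \<Rightarrow> spin) \<Rightarrow> real) \<Rightarrow> nat \<Rightarrow> 'a set \<Rightarrow> ('a\<times>spin) set \<Rightarrow> complex" where
  "cI q \<S> Vs k W T = (if card W = k then fact k * (\<Prod>r\<in>W. q r) * GI \<S> Vs W T else 0)"

lemma GI_step:
  assumes r: "r \<in> W" and WT: "W \<times> UNIV \<subseteq> T"
  shows "GI \<S> Vs (W - {r}) T - GI \<S> Vs (W - {r}) (T - {r}\<times>UNIV) = GI \<S> Vs W T"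
  unfolding GI_def sum_subtractf[symmetric]
proof (rule sum.cong[OF refl])
  fix S assume "S \<in> \<S>"
  show "(if W - {r} \<subseteq> S then \<Sum>\<sigma>\<in>S \<rightarrow>\<^sub>E UNIV. if \<forall>s\<in>S - (W - {r}). (s, \<sigma> s) \<in> T then complex_of_real (Vs S \<sigma>) else 0 else 0) -
         (if W - {r} \<subseteq> S then \<Sum>\<sigma>\<in>S \<rightarrow>\<^sub>E UNIV. if \<forall>s\<in>S - (W - {r}). (s, \<sigma> s) \<in> T - {r} \<times> UNIV then complex_of_real (Vs S \<sigma>) else 0 else 0) =
         (if W \<subseteq> S then \<Sum>\<sigma>\<in>S \<rightarrow>\<^sub>E UNIV. if \<forall>s\<in>S - W. (s, \<sigma> s) \<in> T then complex_of_real (Vs S \<sigma>) else 0 else 0)"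
  proof (cases "r \<in> S")
    case True
    have e: "(W - {r} \<subseteq> S) = (W \<subseteq> S)" using True by auto
    have i1: "(\<forall>s\<in>S - (W - {r}). (s, \<sigma> s) \<in> T) = (\<forall>s\<in>S - W. (s, \<sigma> s) \<in> T)" for \<sigma> :: "'a \<Rightarrow> spin"
      using r WT by auto
    have i2: "\<not> (\<forall>s\<in>S - (W - {r}). (s, \<sigma> s) \<in> T - {r} \<times> UNIV)" for \<sigma> :: "'a \<Rightarrow> spin"
    proof
      assume "\<forall>s\<in>S - (W - {r}). (s, \<sigma> s) \<in> T - {r} \<times> UNIV"
      moreover have "r \<in> S - (W - {r})" using True by simp
      ultimately have "(r, \<sigma> r) \<in> T - {r} \<times> UNIV" by blast
      then show False by simp
    qed
    have z: "(\<Sum>\<sigma>\<in>S \<rightarrow>\<^sub>E UNIV. if \<forall>s\<in>S - (W - {r}). (s, \<sigma> s) \<in> T - {r} \<times> UNIV then complex_of_real (Vs S \<sigma>) else 0) = 0"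
      by (intro sum.neutral ballI) (simp only: i2 if_False)
    show ?thesis unfolding e i1 z by simp
  next
    case False
    have e: "\<not> W \<subseteq> S" using False r by auto
    have i: "(\<forall>s\<in>S - (W - {r}). (s, \<sigma> s) \<in> T - {r} \<times> UNIV) = (\<forall>s\<in>S - (W - {r}). (s, \<sigma> s) \<in> T)" for \<sigma> :: "'a \<Rightarrow> spin"
      using False by auto
    show ?thesis unfolding i using e by simp
  qed
qed

lemma cI_step:
  fixes V :: "'a::{linorder,finite} set"
  shows "Opc V (\<lambda>W T. \<Sum>r\<in>W. q r * (cI q \<S> Vs k (W-{r}) T - cI q \<S> Vs k (W-{r}) (T - {r}\<times>UNIV)))
       = Opc V (cI q \<S> Vs (Suc k))"
proof (rule Opc_cong)
  fix W :: "'a set" and T :: "('a\<times>spin) set" assume WT: "W \<times> UNIV \<subseteq> T"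
  have fin: "finite W" by simp
  show "(\<Sum>r\<in>W. q r * (cI q \<S> Vs k (W-{r}) T - cI q \<S> Vs k (W-{r}) (T - {r}\<times>UNIV))) = cI q \<S> Vs (Suc k) W T"
  proof (cases "card W = Suc k")
    case True
    have "(\<Sum>r\<in>W. q r * (cI q \<S> Vs k (W-{r}) T - cI q \<S> Vs k (W-{r}) (T - {r}\<times>UNIV)))
        = (\<Sum>r\<in>W. fact k * (\<Prod>r\<in>W. q r) * GI \<S> Vs W T)"
    proof (rule sum.cong[OF refl])
      fix r assume r: "r \<in> W"
      have c: "card (W - {r}) = k" using True r by simp
      have p: "q r * (\<Prod>r\<in>W-{r}. q r) = (\<Prod>r\<in>W. q r)" using r fin by (simp add: prod.remove)
      show "q r * (cI q \<S> Vs k (W-{r}) T - cI q \<S> Vs k (W-{r}) (T - {r}\<times>UNIV)) = fact k * (\<Prod>r\<in>W. q r) * GI \<S> Vs W T"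
        unfolding cI_def c using GI_step[OF r WT, of \<S> Vs] p
        by (simp add: right_diff_distrib[symmetric] mult.assoc mult.left_commute)
    qed
    also have "\<dots> = cI q \<S> Vs (Suc k) W T"
      unfolding cI_def using True by (simp add: algebra_simps)
    finally show ?thesis .
  next
    case False
    have "cI q \<S> Vs k (W-{r}) T' = 0" if "r \<in> W" for r T'
    proof -
      have "card (W - {r}) \<noteq> k" using False that fin
        by (metis card_Diff_singleton card_gt_0_iff diff_Suc_1 empty_iff Suc_pred)
      then show ?thesis by (simp add: cI_def)
    qed
    then show ?thesis using False by (simp add: cI_def)
  qed
qed

lemma I_Opc: "I_int \<S> Vs = Opc V (cI q \<S> Vs 0)"
proof (rule ext, rule ext)
  fix \<psi> :: "'a state" and T
  have "Opc V (cI q \<S> Vs 0) \<psi> T = (\<Sum>W\<in>Pow V. if W = {} then GI \<S> Vs {} T * \<psi> T else 0)"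
    unfolding Opc_def by (intro sum.cong refl) (auto simp: cI_def)
  also have "\<dots> = GI \<S> Vs {} T * \<psi> T" by (subst sum.delta) auto
  also have "\<dots> = I_int \<S> Vs \<psi> T" unfolding I_eq GI_def by simp
  finally show "I_int \<S> Vs \<psi> T = Opc V (cI q \<S> Vs 0) \<psi> T" by simp
qed

lemma Hseq_I: "Hseq (I_int \<S> Vs) (eta_dag V q) k = Opc V (cI q \<S> Vs k)"
proof (induction k)
  case 0
  then show ?case using I_Opc by simp
next
  case (Suc k)
  then show ?case by (simp add: comm_Opc cI_step)
qed

lemma eta_add: "eta_dag V q (x + y) = eta_dag V q x + eta_dag V q y"
  unfolding eta_eq by (auto simp: fun_eq_iff sum.distrib[symmetric] algebra_simps intro!: sum.cong)

lemma eta_scale: "eta_dag V q (scale c x) = scale c (eta_dag V q x)"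
  unfolding eta_eq scale_def by (auto simp: fun_eq_iff sum_distrib_left algebra_simps intro!: sum.cong)

lemma eta_zero: "eta_dag V q (\<lambda>_. 0) = (\<lambda>_. 0)"
  unfolding eta_eq by (simp add: fun_eq_iff)

lemma Hseq_add:
  "Hseq (\<lambda>\<psi>. A \<psi> + B \<psi>) (eta_dag V q) n = (\<lambda>\<psi>. Hseq A (eta_dag V q) n \<psi> + Hseq B (eta_dag V q) n \<psi>)"
proof (induction n)
  case (Suc n)
  have "Hseq (\<lambda>\<psi>. A \<psi> + B \<psi>) (eta_dag V q) (Suc n) = comm (\<lambda>\<psi>. Hseq A (eta_dag V q) n \<psi> + Hseq B (eta_dag V q) n \<psi>) (eta_dag V q)"
    by (simp only: Hseq.simps Suc.IH)
  also have "\<dots> = (\<lambda>\<psi>. Hseq A (eta_dag V q) (Suc n) \<psi> + Hseq B (eta_dag V q) (Suc n) \<psi>)"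
    unfolding comm_def Hseq.simps by (simp only: eta_add add_diff_add)
  finally show ?case .
qed simp

lemma Hseq_zero: "Hseq (\<lambda>\<psi>. 0) (eta_dag V q) n = (\<lambda>\<psi>. 0)"
proof (induction n)
  case (Suc n)
  have "eta_dag V q 0 = 0" using eta_zero[of V q] by (simp add: zero_fun_def)
  then show ?case unfolding Hseq.simps Suc.IH comm_def by simp
qed simp



lemma cann_vac: "cann m vacuum = 0" by (simp add: cann_def vacuum_def fun_eq_iff)
lemma cdag_0: "cdag m 0 = 0" by (simp add: cdag_def fun_eq_iff)
lemma cann_0: "cann m 0 = 0" by (simp add: cann_def fun_eq_iff)
lemma scale_0: "scale c 0 = 0" by (simp add: scale_def fun_eq_iff)
lemma num_vac: "num r s vacuum = 0" by (simp add: num_def cann_vac cdag_0)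
lemma num_0: "num r s 0 = 0" by (simp add: num_def cann_0 cdag_0)

lemma Hgen_vac: "H_gen V E t \<mu> U vacuum = 0"
  by (simp add: H_gen_def cann_vac cdag_0 scale_0 num_vac num_0)

lemma scale_add: "scale a y + scale b y = scale (a + b) y"
  by (simp add: scale_def fun_eq_iff algebra_simps)

lemma Hgen_eta_pow:
  assumes eig: "comm (H_gen V E t \<mu> U) (eta_dag V q) = (\<lambda>\<psi>. scale (complex_of_real \<E>) (eta_dag V q \<psi>))"
  shows "H_gen V E t \<mu> U ((eta_dag V q ^^ n) vacuum) = scale (of_nat n * complex_of_real \<E>) ((eta_dag V q ^^ n) vacuum)"
proof (induction n)
  case 0
  then show ?case by (simp add: Hgen_vac scale_def fun_eq_iff)
next
  case (Suc n)
  define x where "x = (eta_dag V q ^^ n) vacuum"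
  have c: "H_gen V E t \<mu> U (eta_dag V q x) - eta_dag V q (H_gen V E t \<mu> U x) = scale (complex_of_real \<E>) (eta_dag V q x)"
    using fun_cong[OF eig, of x] by (simp add: comm_def)
  have "H_gen V E t \<mu> U (eta_dag V q x) = scale (complex_of_real \<E>) (eta_dag V q x) + eta_dag V q (H_gen V E t \<mu> U x)"
    using c by (simp add: algebra_simps)
  also have "\<dots> = scale (complex_of_real \<E>) (eta_dag V q x) + scale (of_nat n * complex_of_real \<E>) (eta_dag V q x)"
    using Suc.IH by (simp add: x_def eta_scale)
  also have "\<dots> = scale (of_nat (Suc n) * complex_of_real \<E>) (eta_dag V q x)"
    by (simp add: scale_add algebra_simps)
  finally show ?case by (simp add: x_def)
qed

lemma Hseq_shift: "Hseq A e (n + k) = Hseq (Hseq A e n) e k"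
  by (induction k) auto

lemma Hgen_seq1:
  assumes eig: "comm (H_gen V E t \<mu> U) (eta_dag V q) = (\<lambda>\<psi>. scale (complex_of_real \<E>) (eta_dag V q \<psi>))"
  shows "Hseq (H_gen V E t \<mu> U) (eta_dag V q) 1 = (\<lambda>\<psi>. scale (complex_of_real \<E>) (eta_dag V q \<psi>))"
  using eig by simp

lemma Hgen_seq2:
  assumes eig: "comm (H_gen V E t \<mu> U) (eta_dag V q) = (\<lambda>\<psi>. scale (complex_of_real \<E>) (eta_dag V q \<psi>))"
    and n: "2 \<le> n"
  shows "Hseq (H_gen V E t \<mu> U) (eta_dag V q) n = (\<lambda>\<psi>. 0)"
proof -
  have 2: "Hseq (H_gen V E t \<mu> U) (eta_dag V q) 2 = (\<lambda>\<psi>. 0)"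
    using eig by (simp add: numeral_2_eq_2 comm_def eta_scale)
  obtain k where nk: "n = 2 + k" using n le_Suc_ex by blast
  show ?thesis by (simp only: nk Hseq_shift 2 Hseq_zero)
qed

lemma I_vac:
  assumes S_sub: "\<And>S. S \<in> \<S> \<Longrightarrow> S \<subseteq> V \<and> card S = M + 1"
    and k: "k \<le> M"
  shows "Hseq (I_int \<S> Vs) (eta_dag V q) k vacuum = 0"
  unfolding Hseq_I Opc_def
proof (rule ext, simp only: zero_fun_apply, rule sum.neutral, rule ballI)
  fix T :: "('a\<times>spin) set" and W assume "W \<in> Pow V"
  show "(if W \<times> UNIV \<subseteq> T then cI q \<S> Vs k W T * vacuum (T - W \<times> UNIV) else 0) = 0"
  proof (cases "W \<times> UNIV \<subseteq> T \<and> T - W \<times> UNIV = {} \<and> card W = k")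
    case True
    then have T: "T = W \<times> UNIV" by auto
    have cW: "card W = k" using True by simp
    have "GI \<S> Vs W T = 0"
      unfolding GI_def
    proof (rule sum.neutral, rule ballI)
      fix S assume S: "S \<in> \<S>"
      show "(if W \<subseteq> S then \<Sum>\<sigma>\<in>S \<rightarrow>\<^sub>E UNIV. if \<forall>s\<in>S - W. (s, \<sigma> s) \<in> T then complex_of_real (Vs S \<sigma>) else 0 else 0) = 0"
      proof (cases "W \<subseteq> S")
        case True
        have "S - W \<noteq> {}"
        proof
          assume "S - W = {}"
          then have "S \<subseteq> W" by auto
          then have "card S \<le> card W" by (simp add: card_mono)
          then show False using S_sub[OF S] k cW by simp
        qed
        then obtain s where s: "s \<in> S - W" by auto
        have nb: "\<not> (\<forall>s\<in>S - W. (s, \<sigma> s) \<in> T)" for \<sigma> :: "'a \<Rightarrow> spin"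
          using s T by auto
        have "(\<Sum>\<sigma>\<in>S \<rightarrow>\<^sub>E UNIV. if \<forall>s\<in>S - W. (s, \<sigma> s) \<in> T then complex_of_real (Vs S \<sigma>) else 0) = 0"
          by (intro sum.neutral ballI) (simp only: nb if_False)
        then show ?thesis by simp
      qed simp
    qed
    then show ?thesis using True by (simp add: cI_def)
  next
    case False
    then show ?thesis by (auto simp: cI_def vacuum_def)
  qed
qed

lemma I_top:
  assumes S_sub: "\<And>S. S \<in> \<S> \<Longrightarrow> S \<subseteq> V \<and> card S = M + 1"
    and V_sum: "\<And>S. S \<in> \<S> \<Longrightarrow> (\<Sum>\<sigma>\<in>(S \<rightarrow>\<^sub>E (UNIV::spin set)). Vs S \<sigma>) = 0"
  shows "Hseq (I_int \<S> Vs) (eta_dag V q) (M + 1) = (\<lambda>\<psi>. 0)"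
proof -
  have "Opc V (cI q \<S> Vs (M+1)) = Opc V (\<lambda>W T. 0)"
  proof (rule Opc_cong)
    fix W :: "'a set" and T :: "('a\<times>spin) set"
    have "card W = M + 1 \<Longrightarrow> GI \<S> Vs W T = 0"
      unfolding GI_def
    proof (rule sum.neutral, rule ballI)
      fix S assume S: "S \<in> \<S>" and cW: "card W = M + 1"
      show "(if W \<subseteq> S then \<Sum>\<sigma>\<in>S \<rightarrow>\<^sub>E UNIV. if \<forall>s\<in>S - W. (s, \<sigma> s) \<in> T then complex_of_real (Vs S \<sigma>) else 0 else 0) = 0"
      proof (cases "W \<subseteq> S")
        case True
        then have "W = S" using S_sub[OF S] cW by (simp add: card_subset_eq)
        then have "(\<Sum>\<sigma>\<in>S \<rightarrow>\<^sub>E UNIV. if \<forall>s\<in>S - W. (s, \<sigma> s) \<in> T then complex_of_real (Vs S \<sigma>) else 0)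
            = complex_of_real (\<Sum>\<sigma>\<in>(S \<rightarrow>\<^sub>E (UNIV::spin set)). Vs S \<sigma>)" by simp
        then show ?thesis using V_sum[OF S] True by simp
      qed simp
    qed
    then show "cI q \<S> Vs (M + 1) W T = 0" by (simp add: cI_def)
  qed
  moreover have "Opc V (\<lambda>(W::'a set) (T::('a\<times>spin) set). (0::complex)) = (\<lambda>\<psi>. 0)"
    by (intro ext) (auto simp: Opc_def intro!: sum.neutral)
  ultimately show ?thesis unfolding Hseq_I by simp
qed

definition paired :: "('a \<times> spin) set \<Rightarrow> bool" where
  "paired T = (\<forall>x\<in>T. {fst x} \<times> UNIV \<subseteq> T)"

lemma eta_pow_paired: "(eta_dag V q ^^ n) vacuum T \<noteq> 0 \<Longrightarrow> paired T"
proof (induction n arbitrary: T)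
  case 0
  then show ?case by (simp add: vacuum_def paired_def split: if_splits)
next
  case (Suc n)
  have "(\<Sum>r\<in>V. q r * (if {r}\<times>UNIV \<subseteq> T then (eta_dag V q ^^ n) vacuum (T - {r}\<times>UNIV) else 0)) \<noteq> 0"
    using Suc.prems by (simp only: funpow.simps comp_apply eta_eq[of V q "(eta_dag V q ^^ n) vacuum"]) simp
  then obtain r where "q r * (if {r}\<times>UNIV \<subseteq> T then (eta_dag V q ^^ n) vacuum (T - {r}\<times>UNIV) else 0) \<noteq> 0"
    by (meson sum.not_neutral_contains_not_neutral)
  then obtain r where r: "{r}\<times>UNIV \<subseteq> T" "(eta_dag V q ^^ n) vacuum (T - {r}\<times>UNIV) \<noteq> 0"
    by (auto split: if_splits)
  from Suc.IH[OF r(2)] have "paired (T - {r}\<times>UNIV)" .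
  show ?case unfolding paired_def
  proof
    fix x assume x: "x \<in> T"
    show "{fst x} \<times> UNIV \<subseteq> T"
    proof (cases "fst x = r")
      case True
      then show ?thesis using r(1) by simp
    next
      case False
      then have "x \<in> T - {r}\<times>UNIV" using x by auto
      then have "{fst x} \<times> UNIV \<subseteq> T - {r}\<times>UNIV" using \<open>paired (T - {r}\<times>UNIV)\<close> unfolding paired_def by blast
      then show ?thesis by blast
    qed
  qed
qed

lemma I_eta_pow:
  assumes V_sum: "\<And>S. S \<in> \<S> \<Longrightarrow> (\<Sum>\<sigma>\<in>(S \<rightarrow>\<^sub>E (UNIV::spin set)). Vs S \<sigma>) = 0"
  shows "I_int \<S> Vs ((eta_dag V q ^^ n) vacuum) = 0"
proof (rule ext)
  fix T :: "('a\<times>spin) set"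
  show "I_int \<S> Vs ((eta_dag V q ^^ n) vacuum) T = 0 T"
  proof (cases "(eta_dag V q ^^ n) vacuum T = 0")
    case False
    then have p: "paired T" by (rule eta_pow_paired)
    have "(\<Sum>S\<in>\<S>. \<Sum>\<sigma>\<in>(S \<rightarrow>\<^sub>E (UNIV::spin set)).
      (if \<forall>s\<in>S. (s, \<sigma> s) \<in> T then complex_of_real (Vs S \<sigma>) else 0)) = 0"
    proof (rule sum.neutral, rule ballI)
      fix S assume S: "S \<in> \<S>"
      have e: "(\<forall>s\<in>S. (s, \<sigma> s) \<in> T) = (S \<times> {Up} \<subseteq> T)" for \<sigma> :: "'a \<Rightarrow> spin"
        using p unfolding paired_def by fastforce
      show "(\<Sum>\<sigma>\<in>(S \<rightarrow>\<^sub>E (UNIV::spin set)).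
          (if \<forall>s\<in>S. (s, \<sigma> s) \<in> T then complex_of_real (Vs S \<sigma>) else 0)) = 0"
        unfolding e using V_sum[OF S] by (cases "S \<times> {Up} \<subseteq> T") (simp_all flip: of_real_sum)
    qed
    then show ?thesis unfolding I_eq by simp
  qed (simp add: I_eq)
qed

theorem mainTheorem6:
  fixes V :: "'a::{linorder,finite} set"
    and E :: "('a \<times> 'a) set"
    and t :: "'a \<Rightarrow> spin \<Rightarrow> 'a \<Rightarrow> spin \<Rightarrow> complex"
    and \<mu> :: "'a \<Rightarrow> spin \<Rightarrow> real"
    and U :: "'a \<Rightarrow> real"
    and q :: "'a \<Rightarrow> complex"
    and \<E> :: real
    and M :: nat
    and \<S> :: "'a set set"
    and Vs :: "'a set \<Rightarrow> ('a \<Rightarrow> spin) \<Rightarrow> real"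
  assumes E_sub: "E \<subseteq> V \<times> V"
    and E_irrefl: "\<And>r r'. (r, r') \<in> E \<Longrightarrow> r \<noteq> r'"
    and E_orient: "\<And>r r'. (r, r') \<in> E \<Longrightarrow> (r', r) \<notin> E"
    and t_herm: "\<And>r \<sigma> r' \<sigma>'. t r \<sigma> r' \<sigma>' = cnj (t r' \<sigma>' r \<sigma>)"
    and eig: "comm (H_gen V E t \<mu> U) (eta_dag V q) = (\<lambda>\<psi>. scale (complex_of_real \<E>) (eta_dag V q \<psi>))"
    and M_ge: "M \<ge> 1"
    and S_sub: "\<And>S. S \<in> \<S> \<Longrightarrow> S \<subseteq> V \<and> card S = M + 1"
    and V_sum: "\<And>S. S \<in> \<S> \<Longrightarrow> (\<Sum>\<sigma>\<in>(S \<rightarrow>\<^sub>E (UNIV::spin set)). Vs S \<sigma>) = 0"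
  defines "H \<equiv> (\<lambda>\<psi>. H_gen V E t \<mu> U \<psi> + I_int \<S> Vs \<psi>)"
  shows "H vacuum = 0
    \<and> Hseq H (eta_dag V q) 1 vacuum = scale (complex_of_real \<E>) (eta_dag V q vacuum)
    \<and> (\<forall>n. 2 \<le> n \<and> n \<le> M \<longrightarrow> Hseq H (eta_dag V q) n vacuum = 0)
    \<and> Hseq H (eta_dag V q) (M + 1) = (\<lambda>\<psi>. 0)
    \<and> (\<forall>n::nat. H ((eta_dag V q ^^ n) vacuum)
                 = scale (of_nat n * complex_of_real \<E>) ((eta_dag V q ^^ n) vacuum))"
proof -
  let ?e = "eta_dag V q"
  let ?G = "H_gen V E t \<mu> U"
  let ?I = "I_int \<S> Vs"
  have HH: "H = (\<lambda>\<psi>. ?G \<psi> + ?I \<psi>)" by (simp add: H_def)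
  have Hs: "Hseq H ?e n = (\<lambda>\<psi>. Hseq ?G ?e n \<psi> + Hseq ?I ?e n \<psi>)" for n
    unfolding HH by (rule Hseq_add)
  have Iv: "Hseq ?I ?e k vacuum = 0" if "k \<le> M" for k
    using I_vac[OF S_sub that] by blast
  have c1: "H vacuum = 0"
    using Iv[of 0] by (simp add: H_def Hgen_vac)
  have c2: "Hseq H ?e 1 vacuum = scale (complex_of_real \<E>) (?e vacuum)"
    using Iv[of 1] M_ge by (simp only: Hs Hgen_seq1[OF eig]) simp
  have c3: "\<forall>n. 2 \<le> n \<and> n \<le> M \<longrightarrow> Hseq H ?e n vacuum = 0"
  proof (intro allI impI)
    fix n assume n: "2 \<le> n \<and> n \<le> M"
    show "Hseq H ?e n vacuum = 0"
      using Iv[of n] n by (simp only: Hs Hgen_seq2[OF eig]) simp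
  qed
  have c4: "Hseq H ?e (M + 1) = (\<lambda>\<psi>. 0)"
    using M_ge by (simp only: Hs Hgen_seq2[OF eig] I_top[OF S_sub V_sum]) simp
  have c5: "\<forall>n::nat. H ((?e ^^ n) vacuum) = scale (of_nat n * complex_of_real \<E>) ((?e ^^ n) vacuum)"
    using Hgen_eta_pow[OF eig] I_eta_pow[OF V_sum] by (simp add: H_def)
  show ?thesis using c1 c2 c3 c4 c5 by blast
qed

end
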